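(* Let $S$ be an MLD-set of a graph $G$, and let $u\in S$ and $x\in V(G)\setminus S$ be such that the pair $\{u,x\}$ is not doubly resolved by $S$. Then $N(x)\cap S=\{u\}$, and $x$ is the only vertex $x'\in V(G)\setminus S$ such that $\{u,x'\}$ is not doubly resolved by $S$.
   Context: All graphs are finite, simple, undirected and connected; $d(u,v)$ is the shortest-path distance and $N(x)$ the open neighborhood of $x$. A set $S\subseteq V(G)$ is resolving if for all distinct $x,y\in V(G)$ there is $u\in S$ with $d(u,x)\ne d(u,y)$; dominating if every vertex not in $S$ has a neighbor in $S$. An MLD-set is a set both resolving and dominating. Two vertices $u,v$ doubly resolve a pair $\{x,y\}$ if $d(u,x)-d(u,y)\ne d(v,x)-d(v,y)$; a set $S$ doubly resolves $\{x,y\}$ if some two vertices of $S$ doubly resolve it. *)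

theory Defs
  imports Main
begin

definition simple_graph :: "'a set \<Rightarrow> ('a \<Rightarrow> 'a \<Rightarrow> bool) \<Rightarrow> bool" where
  "simple_graph V E \<longleftrightarrow> finite V \<and> V \<noteq> {} \<and>
     (\<forall>x y. E x y \<longrightarrow> x \<in> V \<and> y \<in> V) \<and>
     (\<forall>x y. E x y \<longrightarrow> E y x) \<and> (\<forall>x. \<not> E x x)"

definition is_walk :: "('a \<Rightarrow> 'a \<Rightarrow> bool) \<Rightarrow> 'a list \<Rightarrow> bool" where
  "is_walk E p \<longleftrightarrow> p \<noteq> [] \<and> (\<forall>i. Suc i < length p \<longrightarrow> E (p ! i) (p ! Suc i))"

definition walk_betw :: "('a \<Rightarrow> 'a \<Rightarrow> bool) \<Rightarrow> 'a \<Rightarrow> nat \<Rightarrow> 'a \<Rightarrow> bool" where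
  "walk_betw E x n y \<longleftrightarrow> (\<exists>p. is_walk E p \<and> hd p = x \<and> last p = y \<and> length p = Suc n)"

definition connected_graph :: "'a set \<Rightarrow> ('a \<Rightarrow> 'a \<Rightarrow> bool) \<Rightarrow> bool" where
  "connected_graph V E \<longleftrightarrow> simple_graph V E \<and> (\<forall>x\<in>V. \<forall>y\<in>V. \<exists>n. walk_betw E x n y)"

definition gdist :: "('a \<Rightarrow> 'a \<Rightarrow> bool) \<Rightarrow> 'a \<Rightarrow> 'a \<Rightarrow> nat" where
  "gdist E x y = (LEAST n. walk_betw E x n y)"

definition nbhd :: "('a \<Rightarrow> 'a \<Rightarrow> bool) \<Rightarrow> 'a \<Rightarrow> 'a set" where
  "nbhd E x = {y. E x y}"

definition resolving :: "'a set \<Rightarrow> ('a \<Rightarrow> 'a \<Rightarrow> bool) \<Rightarrow> 'a set \<Rightarrow> bool" where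
  "resolving V E S \<longleftrightarrow> S \<subseteq> V \<and>
     (\<forall>x\<in>V. \<forall>y\<in>V. x \<noteq> y \<longrightarrow> (\<exists>u\<in>S. gdist E u x \<noteq> gdist E u y))"

definition dominating :: "'a set \<Rightarrow> ('a \<Rightarrow> 'a \<Rightarrow> bool) \<Rightarrow> 'a set \<Rightarrow> bool" where
  "dominating V E S \<longleftrightarrow> S \<subseteq> V \<and> (\<forall>x\<in>V - S. \<exists>s\<in>S. E x s)"

definition MLD_set :: "'a set \<Rightarrow> ('a \<Rightarrow> 'a \<Rightarrow> bool) \<Rightarrow> 'a set \<Rightarrow> bool" where
  "MLD_set V E S \<longleftrightarrow> resolving V E S \<and> dominating V E S"

definition doubly_resolve :: "('a \<Rightarrow> 'a \<Rightarrow> bool) \<Rightarrow> 'a \<Rightarrow> 'a \<Rightarrow> 'a \<Rightarrow> 'a \<Rightarrow> bool" where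
  "doubly_resolve E u v x y \<longleftrightarrow>
     int (gdist E u x) - int (gdist E u y) \<noteq> int (gdist E v x) - int (gdist E v y)"

definition set_doubly_resolves :: "('a \<Rightarrow> 'a \<Rightarrow> bool) \<Rightarrow> 'a set \<Rightarrow> 'a \<Rightarrow> 'a \<Rightarrow> bool" where
  "set_doubly_resolves E S x y \<longleftrightarrow> (\<exists>u\<in>S. \<exists>v\<in>S. doubly_resolve E u v x y)"

end

theory Submission
  imports Defs
begin

lemma walk0: assumes "walk_betw E a 0 b" shows "a = b"
proof -
  from assms obtain p where "hd p = a" "last p = b" "length p = 1" unfolding walk_betw_def by auto
  then obtain c where "p = [c]" by (cases p) auto
  thus "a = b" using \<open>hd p = a\<close> \<open>last p = b\<close> by simp
qed

lemma walk_refl: "walk_betw E a 0 a"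
  unfolding walk_betw_def is_walk_def by (rule exI[of _ "[a]"]) auto

lemma walk_edge: "E a b \<Longrightarrow> walk_betw E a 1 b"
  unfolding walk_betw_def is_walk_def
  apply (rule exI[of _ "[a,b]"]) by (auto simp: less_Suc_eq nth_Cons split: nat.splits)

lemma gdist_refl: "gdist E a a = 0"
  unfolding gdist_def using walk_refl by (metis (mono_tags) Least_eq_0)

lemma gdist_zero: "gdist E a b = 0 \<Longrightarrow> \<exists>n. walk_betw E a n b \<Longrightarrow> a = b"
  unfolding gdist_def by (metis LeastI walk0)

lemma gdist_edge: "E a b \<Longrightarrow> a \<noteq> b \<Longrightarrow> gdist E a b = 1"
proof -
  assume e: "E a b" and ne: "a \<noteq> b"
  have "gdist E a b \<le> 1" unfolding gdist_def using walk_edge[of E a b, OF e] by (rule Least_le)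
  moreover have "gdist E a b \<noteq> 0" using gdist_zero[of E a b] ne walk_edge[of E a b, OF e] by blast
  ultimately show ?thesis by simp
qed

theorem lemma8:
  fixes V :: "'a set" and E :: "'a \<Rightarrow> 'a \<Rightarrow> bool" and S :: "'a set" and u x :: 'a
  assumes "connected_graph V E"
    and "MLD_set V E S"
    and "u \<in> S" and "x \<in> V - S"
    and "\<not> set_doubly_resolves E S u x"
  shows "nbhd E x \<inter> S = {u} \<and>
         (\<forall>x'\<in>V - S. \<not> set_doubly_resolves E S u x' \<longrightarrow> x' = x)"
proof -
  have sg: "simple_graph V E" and conn: "\<forall>a\<in>V. \<forall>b\<in>V. \<exists>n. walk_betw E a n b"
    using assms(1) unfolding connected_graph_def by auto
  have sym: "\<And>a b. E a b \<Longrightarrow> E b a" and irr: "\<And>a. \<not> E a a"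
    using sg unfolding simple_graph_def by auto
  have SV: "S \<subseteq> V" and dom: "\<forall>y\<in>V - S. \<exists>s\<in>S. E y s"
    and res: "\<forall>a\<in>V. \<forall>b\<in>V. a \<noteq> b \<longrightarrow> (\<exists>w\<in>S. gdist E w a \<noteq> gdist E w b)"
    using assms(2) unfolding MLD_set_def dominating_def resolving_def by auto
  have key: "\<And>y v. \<not> set_doubly_resolves E S u y \<Longrightarrow> v \<in> S \<Longrightarrow>
      int (gdist E v y) = int (gdist E v u) + int (gdist E u y)"
    using assms(3) unfolding set_doubly_resolves_def doubly_resolve_def
    by (force simp: gdist_refl)
  have ux: "u \<noteq> x" using assms(3,4) by auto
  have k1: "gdist E u x \<noteq> 0" using gdist_zero[of E u x] conn assms(3,4) SV ux by blast
  have nb: "\<And>s. s \<in> S \<Longrightarrow> E x s \<Longrightarrow> s = u \<and> gdist E u x = 1"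
  proof -
    fix s assume s: "s \<in> S" "E x s"
    have "s \<noteq> x" using s assms(4) by auto
    hence "gdist E s x = 1" using gdist_edge sym s by metis
    with key[OF assms(5) s(1)] k1 have "gdist E s u = 0" "gdist E u x = 1" by linarith+
    thus "s = u \<and> gdist E u x = 1" using gdist_zero[of E s u] conn s(1) assms(3) SV by blast
  qed
  obtain s where s: "s \<in> S" "E x s" using dom assms(4) by blast
  have d1: "gdist E u x = 1" using nb s by blast
  have "nbhd E x \<inter> S = {u}"
    using nb s unfolding nbhd_def by auto
  moreover have "\<forall>x'\<in>V - S. \<not> set_doubly_resolves E S u x' \<longrightarrow> x' = x"
  proof (intro ballI impI)
    fix x' assume x': "x' \<in> V - S" "\<not> set_doubly_resolves E S u x'"
    have ux': "u \<noteq> x'" using assms(3) x' by auto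
    have k1': "gdist E u x' \<noteq> 0" using gdist_zero[of E u x'] conn assms(3) x'(1) SV ux' by blast
    obtain t where t: "t \<in> S" "E x' t" using dom x' by blast
    have "t \<noteq> x'" using t x' by auto
    hence "gdist E t x' = 1" using gdist_edge sym t by metis
    with key[OF x'(2) t(1)] k1' have d1': "gdist E u x' = 1" by linarith
    have "\<forall>w\<in>S. gdist E w x = gdist E w x'"
      using key[OF x'(2)] key[OF assms(5)] d1 d1' by (metis of_nat_eq_iff)
    thus "x' = x" using res x'(1) assms(4) by (metis DiffD1)
  qed
  ultimately show ?thesis by blast
qed

end
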